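(* Let $d\ge1$, $k:=2^d-1$, and let $$X:=\{0\}\cup\Big\{\big(x_1,\dots,x_d,(4k)^{\sum_{i=1}^{d}2^{i-1}x_i}\big): x\in\{0,1\}^d\setminus\{0\}\Big\}\subseteq\mathbb{Z}^{d+1},$$ $P:=\operatorname{conv}(X)$, and $t:=\sum_{a\in X}a$. Then $P\cap\mathbb{Z}^{d+1}=X$, and whenever $t=\sum_{a\in X\setminus\{0\}}\mu_a a$ with all $\mu_a\in\mathbb{Z}_{\ge0}$, we have $\mu_a=1$ for every $a\in X\setminus\{0\}$. In particular every representation of $t$ as a nonnegative integer combination of integer points of $P$ uses all $2^d-1$ nonzero points of $X$ (each exactly once). *)

theory Defs
  imports "HOL-Analysis.Analysis"
begin

text \<open>Points of Z^(d+1) and R^(d+1) are represented as functions on nat,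
  with coordinates 0..d used (coordinate i corresponds to x_(i+1)) and all
  coordinates beyond d equal to zero.\<close>

definition cube01 :: "nat \<Rightarrow> (nat \<Rightarrow> nat) set" where
  "cube01 d = {x. (\<forall>i<d. x i \<in> {0, 1}) \<and> (\<forall>i\<ge>d. x i = 0)}"

definition liftpt :: "nat \<Rightarrow> (nat \<Rightarrow> nat) \<Rightarrow> (nat \<Rightarrow> int)" where
  "liftpt d x = (\<lambda>i. if i < d then int (x i)
      else if i = d then (4 * (2 ^ d - 1)) ^ (\<Sum>j<d. 2 ^ j * x j)
      else 0)"

definition Xset :: "nat \<Rightarrow> (nat \<Rightarrow> int) set" where
  "Xset d = {(\<lambda>_. 0)} \<union> liftpt d ` (cube01 d - {(\<lambda>_. 0)})"

definition tvec :: "nat \<Rightarrow> (nat \<Rightarrow> int)" where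
  "tvec d = (\<lambda>i. \<Sum>a\<in>Xset d. a i)"

definition convex_fn :: "(nat \<Rightarrow> real) set \<Rightarrow> bool" where
  "convex_fn C \<longleftrightarrow> (\<forall>x\<in>C. \<forall>y\<in>C. \<forall>u v. u \<ge> 0 \<longrightarrow> v \<ge> 0 \<longrightarrow> u + v = 1 \<longrightarrow>
      (\<lambda>i. u * x i + v * y i) \<in> C)"

definition conv_fn :: "(nat \<Rightarrow> real) set \<Rightarrow> (nat \<Rightarrow> real) set" where
  "conv_fn A = \<Inter>{C. A \<subseteq> C \<and> convex_fn C}"

definition to_real :: "(nat \<Rightarrow> int) \<Rightarrow> (nat \<Rightarrow> real)" where
  "to_real a = (\<lambda>i. real_of_int (a i))"

end

theory Submission imports Defs begin
lemma digits_lt: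
  fixes f :: "nat \<Rightarrow> nat"
  assumes "\<forall>m<B. f m < M"
  shows "(\<Sum>m<B. f m * M ^ m) < M ^ B"
  using assms
proof (induction B)
  case 0 then show ?case by simp
next
  case (Suc B)
  have a: "(\<Sum>m<B. f m * M ^ m) < M ^ B" using Suc by simp
  have b0: "f B < M" using Suc.prems by simp
  have b: "f B + 1 \<le> M" using b0 by linarith
  have "(\<Sum>m<Suc B. f m * M ^ m) = (\<Sum>m<B. f m * M ^ m) + f B * M ^ B" by simp
  also have "\<dots> < M ^ B + f B * M ^ B" using a by simp
  also have "\<dots> = (f B + 1) * M ^ B" by simp
  also have "\<dots> \<le> M * M ^ B" using b by (intro mult_right_mono) auto
  finally show ?case by simp
qed

lemma digits_unique:
  fixes f g :: "nat \<Rightarrow> nat"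
  assumes "\<forall>m<B. f m < M" "\<forall>m<B. g m < M"
    and "(\<Sum>m<B. f m * M ^ m) = (\<Sum>m<B. g m * M ^ m)"
  shows "\<forall>m<B. f m = g m"
  using assms
proof (induction B)
  case 0 then show ?case by simp
next
  case (Suc B)
  define s where "s = (\<Sum>m<B. f m * M ^ m)"
  define s' where "s' = (\<Sum>m<B. g m * M ^ m)"
  have a: "s < M ^ B" unfolding s_def using Suc.prems by (intro digits_lt) auto
  have a': "s' < M ^ B" unfolding s'_def using Suc.prems by (intro digits_lt) auto
  have e: "s + f B * M ^ B = s' + g B * M ^ B" using Suc.prems(3) by (simp add: s_def s'_def)
  have P: "M ^ B > 0" using a by linarith
  have "(s + f B * M ^ B) div M ^ B = f B" using a P by simp
  moreover have "(s' + g B * M ^ B) div M ^ B = g B" using a' P by simp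
  ultimately have fg: "f B = g B" using e by simp
  then have "s = s'" using e by simp
  then have ss: "(\<Sum>m<B. f m * M ^ m) = (\<Sum>m<B. g m * M ^ m)" unfolding s_def s'_def .
  have "\<forall>m<B. f m < M" "\<forall>m<B. g m < M" using Suc.prems(1,2) by auto
  then have "\<forall>m<B. f m = g m" using Suc.IH ss by blast
  then show ?case using fg less_Suc_eq by auto
qed

definition nn :: "nat \<Rightarrow> (nat \<Rightarrow> nat) \<Rightarrow> nat" where
  "nn d x = (\<Sum>j<d. 2 ^ j * x j)"

lemma cube_lt2: "x \<in> cube01 d \<Longrightarrow> i < d \<Longrightarrow> x i < 2"
  unfolding cube01_def by auto

lemma cube_out: "x \<in> cube01 d \<Longrightarrow> \<not> i < d \<Longrightarrow> x i = 0"
  unfolding cube01_def by auto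

lemma nn_alt: "nn d x = (\<Sum>j<d. x j * 2 ^ j)"
  unfolding nn_def by (simp add: mult.commute)

lemma nn_inj: "inj_on (nn d) (cube01 d)"
proof (rule inj_onI)
  fix x y assume x: "x \<in> cube01 d" and y: "y \<in> cube01 d" and e: "nn d x = nn d y"
  have "\<forall>m<d. x m = y m"
    using digits_unique[of d x 2 y] e cube_lt2[OF x] cube_lt2[OF y] by (simp add: nn_alt)
  then show "x = y"
  proof (intro ext)
    fix i show "x i = y i"
    proof (cases "i < d")
      case True then show ?thesis using \<open>\<forall>m<d. x m = y m\<close> by blast
    next
      case False then show ?thesis using cube_out[OF x] cube_out[OF y] by simp
    qed
  qed
qed

lemma nn_lt: "x \<in> cube01 d \<Longrightarrow> nn d x < 2 ^ d"
  using digits_lt[of d x 2] cube_lt2[of x d] by (simp add: nn_alt)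

lemma cube_finite: "finite (cube01 d)"
proof -
  have "nn d ` cube01 d \<subseteq> {..<2^d}" using nn_lt by auto
  then have "finite (nn d ` cube01 d)" using finite_subset by blast
  then show ?thesis using finite_imageD nn_inj by blast
qed

lemma cube_card: "card (cube01 d) \<le> 2 ^ d"
proof -
  have "nn d ` cube01 d \<subseteq> {..<2^d}" using nn_lt by auto
  then have "card (nn d ` cube01 d) \<le> 2 ^ d" by (metis card_lessThan card_mono finite_lessThan)
  then show ?thesis using card_image[OF nn_inj[of d]] by simp
qed

definition SS :: "nat \<Rightarrow> (nat \<Rightarrow> nat) set" where
  "SS d = cube01 d - {(\<lambda>_. 0)}"

lemma SS_one: "x \<in> SS d \<Longrightarrow> \<exists>i<d. x i = 1"
proof -
  assume x: "x \<in> SS d"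
  then have c: "x \<in> cube01 d" and nz: "x \<noteq> (\<lambda>_. 0)" by (auto simp: SS_def)
  obtain i where i0: "x i \<noteq> 0"
  proof (rule ccontr)
    assume "\<not> thesis"
    then have "\<forall>i. x i = 0" using that by blast
    then have "x = (\<lambda>_. 0)" by (intro ext) simp
    then show False using nz by simp
  qed
  have id: "i < d" using cube_out[OF c, of i] i0 by blast
  have "x i < 2" using cube_lt2[OF c id] .
  then have "x i = 1" using i0 by simp
  then show ?thesis using id by blast
qed

lemma lift_low: "i < d \<Longrightarrow> liftpt d x i = int (x i)"
  unfolding liftpt_def by (simp only: if_True)

lemma lift_high: "liftpt d x d = (4 * (2 ^ d - 1)) ^ nn d x"
  unfolding liftpt_def nn_def by simp

lemma lift_out: "i > d \<Longrightarrow> liftpt d x i = 0"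
  unfolding liftpt_def by simp

lemma lift_inj: "inj_on (liftpt d) (cube01 d)"
proof (rule inj_onI)
  fix x y assume x: "x \<in> cube01 d" and y: "y \<in> cube01 d" and e: "liftpt d x = liftpt d y"
  have "\<forall>m<d. x m = y m"
  proof (intro allI impI)
    fix m assume m: "m < d"
    have "liftpt d x m = liftpt d y m" using e by simp
    then show "x m = y m" using lift_low[OF m, of x] lift_low[OF m, of y] by simp
  qed
  then show "x = y"
  proof (intro ext)
    fix i show "x i = y i"
    proof (cases "i < d")
      case True then show ?thesis using \<open>\<forall>m<d. x m = y m\<close> by blast
    next
      case False then show ?thesis using cube_out[OF x] cube_out[OF y] by simp
    qed
  qed
qed

lemma lift_nz: "x \<in> SS d \<Longrightarrow> liftpt d x \<noteq> (\<lambda>_. 0)"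
proof
  assume "x \<in> SS d" "liftpt d x = (\<lambda>_. 0)"
  then obtain i where "i < d" "x i = 1" "liftpt d x i = 0" using SS_one by fastforce
  then show False using lift_low[of i d x] by simp
qed

lemma X_minus: "Xset d - {(\<lambda>_. 0)} = liftpt d ` SS d"
proof -
  have nz0: "(\<lambda>_. 0) \<notin> liftpt d ` SS d"
  proof
    assume "(\<lambda>_. 0) \<in> liftpt d ` SS d"
    then obtain x where "(\<lambda>_. 0) = liftpt d x" "x \<in> SS d" by (rule imageE)
    then show False using lift_nz by metis
  qed
  have e1: "liftpt d ` SS d - {(\<lambda>_. 0)} = liftpt d ` SS d" using Diff_insert0[OF nz0, of "{}"] by (simp only: Diff_empty)
  have e2: "Xset d - {(\<lambda>_. 0)} = liftpt d ` SS d - {(\<lambda>_. 0)}"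
    unfolding Xset_def SS_def by (simp only: Un_Diff Diff_cancel Un_empty_left)
  show ?thesis using e2 e1 by (rule trans)
qed

lemma SS_finite: "finite (SS d)"
  unfolding SS_def using cube_finite by simp

lemma X_finite: "finite (Xset d)"
  unfolding Xset_def using cube_finite by simp

lemma sum_X_minus: "(\<Sum>a\<in>Xset d - {(\<lambda>_. 0)}. h a) = (\<Sum>x\<in>SS d. h (liftpt d x))"
  unfolding X_minus
  by (rule sum.reindex_cong[OF _ refl refl]) (rule inj_on_subset[OF lift_inj], auto simp: SS_def)

lemma tvec_alt: "tvec d i = (\<Sum>x\<in>SS d. liftpt d x i)"
proof -
  have "tvec d i = (\<lambda>_. 0::int) i + (\<Sum>a\<in>Xset d - {(\<lambda>_. 0)}. a i)"
    unfolding tvec_def by (rule sum.remove[OF X_finite]) (simp add: Xset_def)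
  then show ?thesis by (simp add: sum_X_minus)
qed

lemma part2:
  fixes d :: nat and \<mu> :: "(nat \<Rightarrow> int) \<Rightarrow> nat"
  assumes d: "d \<ge> 1"
    and h: "\<forall>i. tvec d i = (\<Sum>a\<in>Xset d - {(\<lambda>_. 0)}. int (\<mu> a) * a i)"
  shows "\<forall>a\<in>Xset d - {(\<lambda>_. 0)}. \<mu> a = 1"
proof -
  define Mn :: nat where "Mn = 4 * (2 ^ d - 1)"
  have p2': "(2::nat) ^ 1 \<le> 2 ^ d" using d by (rule power_increasing) simp
  have p2: "2 ^ d \<ge> (2::nat)" using p2' by simp
  have Mint: "(4 * (2 ^ d - 1) :: int) = int Mn"
    unfolding Mn_def using p2 by (simp add: of_nat_diff)
  have cardS: "card (SS d) < Mn"
  proof -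
    have "card (SS d) \<le> card (cube01 d)" unfolding SS_def by (rule card_mono[OF cube_finite]) auto
    then show ?thesis using cube_card[of d] p2 unfolding Mn_def by linarith
  qed
  have hx: "\<forall>i. (\<Sum>x\<in>SS d. liftpt d x i) = (\<Sum>x\<in>SS d. int (\<mu> (liftpt d x)) * liftpt d x i)"
    using h by (simp add: tvec_alt sum_X_minus)
  have bound: "\<mu> (liftpt d x) < Mn" if x: "x \<in> SS d" for x
  proof -
    obtain i where i: "i < d" "x i = 1" using SS_one[OF x] by blast
    have "int (\<mu> (liftpt d x)) = int (\<mu> (liftpt d x)) * liftpt d x i" using i lift_low by simp
    also have "\<dots> \<le> (\<Sum>y\<in>SS d. int (\<mu> (liftpt d y)) * liftpt d y i)"
      by (rule member_le_sum[OF x]) (use lift_low i SS_finite in auto)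
    also have "\<dots> = (\<Sum>y\<in>SS d. liftpt d y i)" using hx by simp
    also have "\<dots> \<le> (\<Sum>y\<in>SS d. 1)"
    proof (rule sum_mono)
      fix y assume "y \<in> SS d"
      then have "y i < 2" using cube_lt2 i(1) unfolding SS_def by blast
      then show "liftpt d y i \<le> 1" using lift_low[OF i(1)] by simp
    qed
    also have "\<dots> = int (card (SS d))" by simp
    finally show ?thesis using cardS by linarith
  qed
  have LH: "liftpt d x d = int Mn ^ nn d x" for x
    using lift_high[of d x] unfolding Mint .
  have eq: "(\<Sum>x\<in>SS d. Mn ^ nn d x) = (\<Sum>x\<in>SS d. \<mu> (liftpt d x) * Mn ^ nn d x)"
  proof -
    have "int (\<Sum>x\<in>SS d. Mn ^ nn d x) = (\<Sum>x\<in>SS d. liftpt d x d)"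
      by (simp add: LH)
    also have "\<dots> = (\<Sum>x\<in>SS d. int (\<mu> (liftpt d x)) * liftpt d x d)" using hx by simp
    also have "\<dots> = int (\<Sum>x\<in>SS d. \<mu> (liftpt d x) * Mn ^ nn d x)"
      by (simp add: LH)
    finally show ?thesis by (simp only: of_nat_eq_iff)
  qed
  define N where "N = nn d ` SS d"
  have injS: "inj_on (nn d) (SS d)" by (rule inj_on_subset[OF nn_inj]) (auto simp: SS_def)
  define F where "F m = (if m \<in> N then \<mu> (liftpt d (the_inv_into (SS d) (nn d) m)) else 0)" for m
  define G where "G m = (if m \<in> N then 1 else (0::nat))" for m
  have Nsub: "N \<subseteq> {..<2^d}" unfolding N_def SS_def using nn_lt by auto
  have reidx: "(\<Sum>x\<in>SS d. H (nn d x)) = (\<Sum>m<2^d. (if m \<in> N then H m else 0))" for H :: "nat \<Rightarrow> nat"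
  proof -
    have "(\<Sum>x\<in>SS d. H (nn d x)) = (\<Sum>m\<in>N. H m)" unfolding N_def
      using sum.reindex[OF injS, of H] by simp
    also have "\<dots> = (\<Sum>m<2^d. (if m \<in> N then H m else 0))"
      using Nsub by (simp add: sum.If_cases Int_absorb1)
    finally show ?thesis .
  qed
  have Finv: "F (nn d x) = \<mu> (liftpt d x)" if "x \<in> SS d" for x
    using that injS unfolding F_def N_def by (simp add: the_inv_into_f_f)
  have e1: "(\<Sum>x\<in>SS d. \<mu> (liftpt d x) * Mn ^ nn d x) = (\<Sum>x\<in>SS d. F (nn d x) * Mn ^ nn d x)"
    using Finv by simp
  have eqFG: "(\<Sum>m<2^d. F m * Mn ^ m) = (\<Sum>m<2^d. G m * Mn ^ m)"
  proof -
    have "(\<Sum>m<2^d. F m * Mn ^ m) = (\<Sum>m<2^d. (if m \<in> N then F m * Mn ^ m else 0))"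
      by (rule sum.cong) (auto simp: F_def)
    also have "\<dots> = (\<Sum>x\<in>SS d. F (nn d x) * Mn ^ nn d x)"
      using reidx[of "\<lambda>m. F m * Mn ^ m"] by simp
    also have "\<dots> = (\<Sum>x\<in>SS d. Mn ^ nn d x)" using e1 eq by simp
    also have "\<dots> = (\<Sum>m<2^d. (if m \<in> N then Mn ^ m else 0))"
      using reidx[of "\<lambda>m. Mn ^ m"] by simp
    also have "\<dots> = (\<Sum>m<2^d. G m * Mn ^ m)"
      by (rule sum.cong) (auto simp: G_def)
    finally show ?thesis .
  qed
  have Fb: "\<forall>m<2^d. F m < Mn"
  proof (intro allI impI)
    fix m :: nat assume "m < 2^d"
    show "F m < Mn"
    proof (cases "m \<in> N")
      case True
      then obtain x where x: "x \<in> SS d" "m = nn d x" unfolding N_def by auto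
      then show ?thesis using Finv bound by simp
    next
      case False then show ?thesis using p2 unfolding F_def Mn_def by simp
    qed
  qed
  have Gb: "\<forall>m<2^d. G m < Mn" using p2 unfolding G_def Mn_def by auto
  have FG: "\<forall>m<2^d. F m = G m" by (rule digits_unique[OF Fb Gb eqFG])
  show ?thesis
  proof
    fix a assume "a \<in> Xset d - {(\<lambda>_. 0)}"
    then obtain x where x: "x \<in> SS d" "a = liftpt d x" using X_minus by auto
    have "nn d x \<in> N" "nn d x < 2^d" using x nn_lt unfolding N_def SS_def by auto
    then show "\<mu> a = 1" using FG Finv[OF x(1)] x(2) unfolding G_def by auto
  qed
qed

definition hullC :: "nat \<Rightarrow> (nat \<Rightarrow> real) set" where
  "hullC d = {z. \<exists>l. (\<forall>a\<in>Xset d. l a \<ge> 0) \<and> (\<Sum>a\<in>Xset d. l a) = 1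
      \<and> z = (\<lambda>i. \<Sum>a\<in>Xset d. l a * to_real a i)}"

lemma hullC_convex: "convex_fn (hullC d)"
  unfolding convex_fn_def
proof (intro ballI allI impI)
  fix x y u v assume x: "x \<in> hullC d" and y: "y \<in> hullC d"
    and u: "(0::real) \<le> u" and v: "0 \<le> v" and uv: "u + v = 1"
  obtain l where l: "\<forall>a\<in>Xset d. l a \<ge> 0" "(\<Sum>a\<in>Xset d. l a) = 1"
    "x = (\<lambda>i. \<Sum>a\<in>Xset d. l a * to_real a i)" using x unfolding hullC_def by blast
  obtain l' where l': "\<forall>a\<in>Xset d. l' a \<ge> 0" "(\<Sum>a\<in>Xset d. l' a) = 1"
    "y = (\<lambda>i. \<Sum>a\<in>Xset d. l' a * to_real a i)" using y unfolding hullC_def by blast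
  define m where "m a = u * l a + v * l' a" for a
  have "\<forall>a\<in>Xset d. m a \<ge> 0" unfolding m_def using l(1) l'(1) u v by simp
  moreover have "(\<Sum>a\<in>Xset d. m a) = 1"
    unfolding m_def by (simp add: sum.distrib sum_distrib_left[symmetric] l(2) l'(2) uv)
  moreover have "(\<lambda>i. u * x i + v * y i) = (\<lambda>i. \<Sum>a\<in>Xset d. m a * to_real a i)"
  proof
    fix i
    show "u * x i + v * y i = (\<Sum>a\<in>Xset d. m a * to_real a i)"
      unfolding m_def l(3) l'(3) by (simp add: sum.distrib sum_distrib_left distrib_right mult.assoc)
  qed
  ultimately show "(\<lambda>i. u * x i + v * y i) \<in> hullC d" unfolding hullC_def by blast
qed

lemma X_in_hullC: "a \<in> Xset d \<Longrightarrow> to_real a \<in> hullC d"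
proof -
  assume a: "a \<in> Xset d"
  define l where "l b = (if b = a then 1 else (0::real))" for b
  have "(\<Sum>b\<in>Xset d. l b) = 1" unfolding l_def using a X_finite[of d] by simp
  moreover have "to_real a = (\<lambda>i. \<Sum>b\<in>Xset d. l b * to_real b i)"
  proof
    fix i
    have "(\<Sum>b\<in>Xset d. l b * to_real b i) = (\<Sum>b\<in>Xset d. if b = a then to_real a i else 0)"
      by (rule sum.cong) (auto simp: l_def)
    also have "\<dots> = to_real a i" using a X_finite[of d] by simp
    finally show "to_real a i = (\<Sum>b\<in>Xset d. l b * to_real b i)" by simp
  qed
  moreover have "\<forall>b\<in>Xset d. l b \<ge> 0" unfolding l_def by simp
  ultimately show ?thesis unfolding hullC_def by blast
qed

lemma X_low: "a \<in> Xset d \<Longrightarrow> i < d \<Longrightarrow> a i = 0 \<or> a i = 1"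
proof -
  assume a: "a \<in> Xset d" and i: "i < d"
  show ?thesis
  proof (cases "a = (\<lambda>_. 0)")
    case True then show ?thesis by simp
  next
    case False
    then have "a \<in> Xset d - {(\<lambda>_. 0)}" using a by simp
    then obtain x where x: "x \<in> SS d" "a = liftpt d x" unfolding X_minus by (rule imageE)
    have "x i < 2" using x(1) cube_lt2[OF _ i] unfolding SS_def by blast
    then have "x i = 0 \<or> x i = 1" by linarith
    then show ?thesis using lift_low[OF i, of x] x(2) by auto
  qed
qed

lemma X_high: "a \<in> Xset d \<Longrightarrow> i > d \<Longrightarrow> a i = 0"
proof -
  assume a: "a \<in> Xset d" and i: "i > d"
  show ?thesis
  proof (cases "a = (\<lambda>_. 0)")
    case True then show ?thesis by simp
  next
    case False
    then have "a \<in> Xset d - {(\<lambda>_. 0)}" using a by simp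
    then obtain x where x: "x \<in> SS d" "a = liftpt d x" unfolding X_minus by (rule imageE)
    then show ?thesis using lift_out[OF i, of x] by simp
  qed
qed

lemma X_det: "a \<in> Xset d \<Longrightarrow> b \<in> Xset d \<Longrightarrow> \<forall>i<d. a i = b i \<Longrightarrow> a = b"
proof -
  have key: "a = (\<lambda>_. 0)" if a: "a \<in> Xset d" and h: "\<forall>i<d. a i = 0" for a
  proof (rule ccontr)
    assume "a \<noteq> (\<lambda>_. 0)"
    then have "a \<in> Xset d - {(\<lambda>_. 0)}" using a by simp
    then obtain x where x: "x \<in> SS d" "a = liftpt d x" unfolding X_minus by (rule imageE)
    obtain i where i: "i < d" "x i = 1" using SS_one[OF x(1)] by blast
    have "a i = 1" using lift_low[OF i(1), of x] x(2) i(2) by simp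
    then show False using h i(1) by simp
  qed
  assume a: "a \<in> Xset d" and b: "b \<in> Xset d" and e: "\<forall>i<d. a i = b i"
  show "a = b"
  proof (cases "a = (\<lambda>_. 0)")
    case True
    then have "\<forall>i<d. b i = 0" using e by simp
    then show ?thesis using key[OF b] True by simp
  next
    case aF: False
    show ?thesis
    proof (cases "b = (\<lambda>_. 0)")
      case True
      then have "\<forall>i<d. a i = 0" using e by simp
      then show ?thesis using key[OF a] aF by simp
    next
      case False
      have "a \<in> Xset d - {(\<lambda>_. 0)}" using a aF by simp
      then obtain x where x: "x \<in> SS d" "a = liftpt d x" unfolding X_minus by (rule imageE)
      have "b \<in> Xset d - {(\<lambda>_. 0)}" using b False by simp
      then obtain y where y: "y \<in> SS d" "b = liftpt d y" unfolding X_minus by (rule imageE)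
      have "x = y"
      proof (intro ext)
        fix i show "x i = y i"
        proof (cases "i < d")
          case True
          then have "int (x i) = int (y i)" using e x(2) y(2) lift_low[OF True] by metis
          then show ?thesis by simp
        next
          case False then show ?thesis using cube_out[of x d i] cube_out[of y d i] x(1) y(1)
            unfolding SS_def by simp
        qed
      qed
      then show ?thesis using x y by simp
    qed
  qed
qed

lemma hull_int:
  fixes y :: "nat \<Rightarrow> int"
  assumes yh: "\<forall>i>d. y i = 0" and yc: "to_real y \<in> hullC d"
  shows "y \<in> Xset d"
proof -
  obtain l where l0: "\<forall>a\<in>Xset d. l a \<ge> 0" and l1: "(\<Sum>a\<in>Xset d. l a) = 1"
    and ly: "to_real y = (\<lambda>i. \<Sum>a\<in>Xset d. l a * to_real a i)" using yc unfolding hullC_def by blast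
  have fin: "finite (Xset d)" by (rule X_finite)
  have yi: "real_of_int (y i) = (\<Sum>a\<in>Xset d. l a * real_of_int (a i))" for i
    using fun_cong[OF ly, of i] unfolding to_real_def by simp
  have agree: "a i = y i" if a: "a \<in> Xset d" and la: "l a > 0" and i: "i < d" for a i
  proof -
    have nnb: "0 \<le> l b * real_of_int (b i) \<and> 0 \<le> l b * (1 - real_of_int (b i))"
      if b: "b \<in> Xset d" for b
    proof -
      have "b i = 0 \<or> b i = 1" by (rule X_low[OF b i])
      then have h1: "0 \<le> real_of_int (b i)" "0 \<le> 1 - real_of_int (b i)" by auto
      have h0: "0 \<le> l b" using l0 b by blast
      show ?thesis using h0 h1 by simp
    qed
    have nn: "\<forall>b\<in>Xset d. 0 \<le> l b * real_of_int (b i)" using nnb by blast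
    have nn': "\<forall>b\<in>Xset d. 0 \<le> l b * (1 - real_of_int (b i))" using nnb by blast
    have s1: "(\<Sum>b\<in>Xset d. l b * (1 - real_of_int (b i))) = 1 - real_of_int (y i)"
      using l1 yi[of i] by (simp add: right_diff_distrib sum_subtractf)
    have "0 \<le> (\<Sum>b\<in>Xset d. l b * real_of_int (b i))" by (rule sum_nonneg) (use nn in blast)
    then have ge0: "real_of_int (y i) \<ge> 0" using yi[of i] by linarith
    have "0 \<le> (\<Sum>b\<in>Xset d. l b * (1 - real_of_int (b i)))" by (rule sum_nonneg) (use nn' in blast)
    then have le1: "real_of_int (y i) \<le> 1" using s1 by linarith
    have "y i = 0 \<or> y i = 1" using ge0 le1 by linarith
    then show ?thesis
    proof
      assume y0: "y i = 0"
      then have "(\<Sum>b\<in>Xset d. l b * real_of_int (b i)) = 0" using yi[of i] by simp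
      moreover have "(\<Sum>b\<in>Xset d. l b * real_of_int (b i)) = 0 \<longleftrightarrow> (\<forall>b\<in>Xset d. l b * real_of_int (b i) = 0)"
        by (rule sum_nonneg_eq_0_iff[OF fin]) (use nn in blast)
      ultimately have "\<forall>b\<in>Xset d. l b * real_of_int (b i) = 0" by (rule rev_iffD1)
      then have "l a * real_of_int (a i) = 0" using a by (rule bspec)
      then show ?thesis using la y0 by simp
    next
      assume y1: "y i = 1"
      then have "(\<Sum>b\<in>Xset d. l b * (1 - real_of_int (b i))) = 0" using s1 by simp
      moreover have "(\<Sum>b\<in>Xset d. l b * (1 - real_of_int (b i))) = 0 \<longleftrightarrow> (\<forall>b\<in>Xset d. l b * (1 - real_of_int (b i)) = 0)"
        by (rule sum_nonneg_eq_0_iff[OF fin]) (use nn' in blast)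
      ultimately have "\<forall>b\<in>Xset d. l b * (1 - real_of_int (b i)) = 0" by (rule rev_iffD1)
      then have "l a * (1 - real_of_int (a i)) = 0" using a by (rule bspec)
      then show ?thesis using la y1 by simp
    qed
  qed
  have "\<exists>a0\<in>Xset d. l a0 > 0"
  proof (rule ccontr)
    assume "\<not> (\<exists>a0\<in>Xset d. l a0 > 0)"
    then have "\<forall>a\<in>Xset d. l a \<le> 0" by (simp add: not_less)
    then have "(\<Sum>a\<in>Xset d. l a) \<le> 0" by (intro sum_nonpos) blast
    then show False using l1 by simp
  qed
  then obtain a0 where a0: "a0 \<in> Xset d" "l a0 > 0" by blast
  have only: "l b = 0" if b: "b \<in> Xset d" "b \<noteq> a0" for b
  proof (rule ccontr)
    assume "l b \<noteq> 0"
    moreover have "l b \<ge> 0" using l0 b(1) by blast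
    ultimately have "l b > 0" by simp
    then have "\<forall>i<d. b i = a0 i" using agree[OF b(1)] agree[OF a0] by simp
    then have "b = a0" using X_det[OF b(1) a0(1)] by blast
    then show False using b(2) by simp
  qed
  have sumsplit: "(\<Sum>b\<in>Xset d. l b * f b) = l a0 * f a0" for f :: "(nat \<Rightarrow> int) \<Rightarrow> real"
  proof -
    have "(\<Sum>b\<in>Xset d. l b * f b) = l a0 * f a0 + (\<Sum>b\<in>Xset d - {a0}. l b * f b)"
      by (rule sum.remove[OF fin a0(1)])
    also have "(\<Sum>b\<in>Xset d - {a0}. l b * f b) = 0"
      by (rule sum.neutral) (use only in auto)
    finally show ?thesis by simp
  qed
  have "l a0 = 1" using l1 sumsplit[of "\<lambda>_. 1"] by simp
  then have "real_of_int (y i) = real_of_int (a0 i)" for i using yi[of i] sumsplit[of "\<lambda>b. real_of_int (b i)"] by simp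
  then have "y = a0" by (intro ext) simp
  then show ?thesis using a0 by simp
qed

lemma part1:
  "{y :: nat \<Rightarrow> int. (\<forall>i>d. y i = 0) \<and> to_real y \<in> conv_fn (to_real ` Xset d)} = Xset d"
proof
  have sub: "conv_fn (to_real ` Xset d) \<subseteq> hullC d"
    unfolding conv_fn_def using hullC_convex X_in_hullC by (intro Inter_lower) blast
  show "{y :: nat \<Rightarrow> int. (\<forall>i>d. y i = 0) \<and> to_real y \<in> conv_fn (to_real ` Xset d)} \<subseteq> Xset d"
    using hull_int sub by blast
  show "Xset d \<subseteq> {y :: nat \<Rightarrow> int. (\<forall>i>d. y i = 0) \<and> to_real y \<in> conv_fn (to_real ` Xset d)}"
  proof
    fix a assume a: "a \<in> Xset d"
    have "to_real a \<in> conv_fn (to_real ` Xset d)" unfolding conv_fn_def using a by blast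
    then show "a \<in> {y :: nat \<Rightarrow> int. (\<forall>i>d. y i = 0) \<and> to_real y \<in> conv_fn (to_real ` Xset d)}"
      using X_high[OF a] by blast
  qed
qed

theorem mainTheorem3:
  fixes d :: nat
  assumes "d \<ge> 1"
  shows "{y :: nat \<Rightarrow> int. (\<forall>i>d. y i = 0) \<and> to_real y \<in> conv_fn (to_real ` Xset d)} = Xset d
    \<and> (\<forall>\<mu> :: (nat \<Rightarrow> int) \<Rightarrow> nat.
          (\<forall>i. tvec d i = (\<Sum>a\<in>Xset d - {(\<lambda>_. 0)}. int (\<mu> a) * a i))
          \<longrightarrow> (\<forall>a\<in>Xset d - {(\<lambda>_. 0)}. \<mu> a = 1))"
  using part1 part2[OF assms] by blast
end
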